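(* Let $Q$ be a finite set of item collections; for each $q\in Q$ let $n_q\ge 1$ be the number of items in $q$. On a probability space, let there be, for each $q\in Q$ and $i\in\{1,\ldots,n_q\}$, random variables: a feature vector $x_{q,i}$, a relevance indicator $r_{q,i}\in\{0,1\}$, an examination indicator $e_{q,i}\in\{0,1\}$, and a target (click) label $c_{q,i}\in\{0,1\}$. Let $\mathcal{I}_q=\{r_{q,1},\ldots,r_{q,n_q},x_{q,1},\ldots,x_{q,n_q}\}$ and define the conditional examination probabilities $$p_{q,i}=P\{e_{q,i}=1\mid \mathcal{I}_q\},\qquad p_{q,i,j}=P\{e_{q,i}e_{q,j}=1\mid \mathcal{I}_q\},\quad i,j\in\{1,\ldots,n_q\}.$$ Assume: (1) (examination hypothesis) $c_{q,i}=e_{q,i}\, r_{q,i}$ for all $q\in Q$ and all $i=1,\ldots,n_q$; (2) (positivity) $p_{q,i}>0$ and $p_{q,i,j}>0$ for all $q\in Q$ and all $i,j=1,\ldots,n_q$. Let $f$ be a (deterministic) ranking model mapping feature vectors to real scores, and let $\ell_{1,1},\ell_{1,0},\ell_{0,1},\ell_{0,0}$ be real-valued functions of two real scores. Set $$\mathbf{z}(u,v)=\big(\ell_{1,1}(u,v),\ \ell_{1,0}(u,v),\ \ell_{0,1}(u,v),\ \ell_{0,0}(u,v)\big)^{\mathsf T},\qquad \mathbf{s}(b_1,b_2)=\big(b_1b_2,\ b_1(1-b_2),\ (1-b_1)b_2,\ (1-b_1)(1-b_2)\big)^{\mathsf T}$$ for $b_1,b_2\in\{0,1\}$. With $a_{q,i}=1/p_{q,i}$,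 $a_{q,j}=1/p_{q,j}$, $a_{q,i,j}=1/p_{q,i,j}$, define the $4\times 4$ matrix $$\mathbf{A}_{q,i,j}=\begin{pmatrix} a_{q,i,j} & 0 & 0 & 0\\ a_{q,i}-a_{q,i,j} & a_{q,i} & 0 & 0\\ a_{q,j}-a_{q,i,j} & 0 & a_{q,j} & 0\\ 1-a_{q,i}-a_{q,j}+a_{q,i,j} & 1-a_{q,i} & 1-a_{q,j} & 1\end{pmatrix},$$ and the loss $$L_u=\sum_{q\in Q}\sum_{i,j=1}^{n_q}\mathbf{z}\big(f(x_{q,i}),f(x_{q,j})\big)^{\mathsf T}\,\mathbf{A}_{q,i,j}\,\mathbf{s}(c_{q,i},c_{q,j}).$$ Then $L_u$ is unbiased, i.e. $$\mathrm{E}[L_u]=\mathrm{E}\left[\sum_{q\in Q}\sum_{i,j=1}^{n_q}\mathbf{z}\big(f(x_{q,i}),f(x_{q,j})\big)^{\mathsf T}\,\mathbf{s}(r_{q,i},r_{q,j})\right].$$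
   Context: This is the setting of pairwise learning-to-rank with position bias: $r_{q,i}$ is the (unobserved) true relevance of the $i$-th item of collection $q$, $e_{q,i}$ indicates whether the user examined it, and $c_{q,i}$ is the observed implicit-feedback label (e.g. a click). The examination indicators of different items need not be independent, and examination need not be independent of relevance. All expectations appearing in the statement are assumed to exist (be finite). *)

theory Defs
  imports "HOL-Probability.Probability"
begin

definition info_sigma ::
  "'w measure \<Rightarrow> 'f measure \<Rightarrow> (nat \<Rightarrow> 'w \<Rightarrow> 'f) \<Rightarrow> (nat \<Rightarrow> 'w \<Rightarrow> real) \<Rightarrow> nat \<Rightarrow> 'w measure" where
  "info_sigma M Nx x r n =
     sigma (space M)
       (\<Union>i\<in>{1..n}. {x i -` A \<inter> space M | A. A \<in> sets Nx}
                  \<union> {r i -` B \<inter> space M | B. B \<in> sets (borel :: real measure)})"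

definition zvec :: "(real \<Rightarrow> real \<Rightarrow> real) \<Rightarrow> (real \<Rightarrow> real \<Rightarrow> real) \<Rightarrow>
    (real \<Rightarrow> real \<Rightarrow> real) \<Rightarrow> (real \<Rightarrow> real \<Rightarrow> real) \<Rightarrow> real \<Rightarrow> real \<Rightarrow> real^4" where
  "zvec l11 l10 l01 l00 u v = vector [l11 u v, l10 u v, l01 u v, l00 u v]"

definition svec :: "real \<Rightarrow> real \<Rightarrow> real^4" where
  "svec b1 b2 = vector [b1 * b2, b1 * (1 - b2), (1 - b1) * b2, (1 - b1) * (1 - b2)]"

definition Amat :: "real \<Rightarrow> real \<Rightarrow> real \<Rightarrow> real^4^4" where
  "Amat ai aj aij = vector [
      vector [aij, 0, 0, 0],
      vector [ai - aij, ai, 0, 0],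
      vector [aj - aij, 0, aj, 0],
      vector [1 - ai - aj + aij, 1 - ai, 1 - aj, 1]]"

end

theory Submission
  imports Defs
begin

lemma vector4:
  "(vector [a,b,c,d] :: ('a::zero)^4) $ 1 = a"
  "(vector [a,b,c,d] :: ('a::zero)^4) $ 2 = b"
  "(vector [a,b,c,d] :: ('a::zero)^4) $ 3 = c"
  "(vector [a,b,c,d] :: ('a::zero)^4) $ 4 = d"
  unfolding vector_def by simp_all

lemma Amat_comp:
  "(Amat ai aj aij *v svec ci cj) $ 1 = aij*(ci*cj)"
  "(Amat ai aj aij *v svec ci cj) $ 2 = (ai - aij) * (ci*cj) + ai * (ci*(1-cj))"
  "(Amat ai aj aij *v svec ci cj) $ 3 = (aj - aij) * (ci*cj) + aj * ((1-ci)*cj)"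
  "(Amat ai aj aij *v svec ci cj) $ 4 = (1-ai-aj+aij) * (ci*cj) + (1-ai) * (ci*(1-cj)) + (1-aj)*((1-ci)*cj) + (1-ci)*(1-cj)"
  by (simp_all add: Amat_def svec_def matrix_vector_mult_def sum_4 vector4)

lemma svec_comp:
  "svec b1 b2 $ 1 = b1 * b2" "svec b1 b2 $ 2 = b1 * (1 - b2)"
  "svec b1 b2 $ 3 = (1 - b1) * b2" "svec b1 b2 $ 4 = (1 - b1) * (1 - b2)"
  by (simp_all add: svec_def vector4)

lemma inner4: "(u::real^4) \<bullet> v = (\<Sum>k\<in>UNIV. u$k * v$k)"
  by (simp add: inner_vec_def)

lemma info_sigma_props:
  assumes xm: "\<And>i. i\<in>{1..n} \<Longrightarrow> x i \<in> measurable M Nx"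
    and rm: "\<And>i. i\<in>{1..n} \<Longrightarrow> r i \<in> borel_measurable M"
  shows "subalgebra M (info_sigma M Nx x r n)"
    "\<And>i. i\<in>{1..n} \<Longrightarrow> r i \<in> borel_measurable (info_sigma M Nx x r n)"
    "\<And>i. i\<in>{1..n} \<Longrightarrow> x i \<in> measurable (info_sigma M Nx x r n) Nx"
proof -
  define Gen where "Gen = (\<Union>i\<in>{1..n}. {x i -` A \<inter> space M | A. A \<in> sets Nx}
                  \<union> {r i -` B \<inter> space M | B. B \<in> sets (borel :: real measure)})"
  have GP: "Gen \<subseteq> Pow (space M)" unfolding Gen_def by auto
  have sp: "space (info_sigma M Nx x r n) = space M"
    unfolding info_sigma_def Gen_def[symmetric] by (simp add: space_measure_of_conv)
  have st: "sets (info_sigma M Nx x r n) = sigma_sets (space M) Gen"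
    unfolding info_sigma_def Gen_def[symmetric] using GP by simp
  have GM: "Gen \<subseteq> sets M"
    unfolding Gen_def using xm rm by (auto simp: measurable_sets)
  show "subalgebra M (info_sigma M Nx x r n)"
    unfolding subalgebra_def sp st using GM by (simp add: sets.sigma_sets_subset)
  show "r i \<in> borel_measurable (info_sigma M Nx x r n)" if i: "i\<in>{1..n}" for i
  proof (rule measurableI)
    fix B :: "real set" assume "B \<in> sets borel"
    then have "r i -` B \<inter> space M \<in> Gen" unfolding Gen_def using i by blast
    then show "r i -` B \<inter> space (info_sigma M Nx x r n) \<in> sets (info_sigma M Nx x r n)"
      unfolding sp st by (rule sigma_sets.Basic)
  qed auto
  show "x i \<in> measurable (info_sigma M Nx x r n) Nx" if i: "i\<in>{1..n}" for i
  proof (rule measurableI)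
    fix A assume "A \<in> sets Nx"
    then have "x i -` A \<inter> space M \<in> Gen" unfolding Gen_def using i by blast
    then show "x i -` A \<inter> space (info_sigma M Nx x r n) \<in> sets (info_sigma M Nx x r n)"
      unfolding sp st by (rule sigma_sets.Basic)
  next
    fix w assume "w \<in> space (info_sigma M Nx x r n)"
    then show "x i w \<in> space Nx" using xm[OF i] unfolding sp by (auto simp: measurable_space)
  qed
qed

lemma zvec_comp: "zvec l11 l10 l01 l00 u v $ k =
   (if k = 1 then l11 u v else if k = 2 then l10 u v else if k = 3 then l01 u v else l00 u v)"
proof -
  have v: "(vector [a,b,c,d] :: ('a::zero)^4) $ 1 = a"
  "(vector [a,b,c,d] :: ('a::zero)^4) $ 2 = b"
  "(vector [a,b,c,d] :: ('a::zero)^4) $ 3 = c"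
  "(vector [a,b,c,d] :: ('a::zero)^4) $ 4 = d" for a b c d
  unfolding vector_def by simp_all
  show ?thesis using exhaust_4[of k] by (auto simp: zvec_def v)
qed

lemma comp_meas:
  fixes l :: "real \<Rightarrow> real \<Rightarrow> real"
  assumes "(\<lambda>(u, v). l u v) \<in> borel_measurable borel" "(F1::'a\<Rightarrow>real) \<in> borel_measurable G" "F2 \<in> borel_measurable G"
  shows "(\<lambda>w. l (F1 w) (F2 w)) \<in> borel_measurable G"
proof -
  have "(\<lambda>(u, v). l u v) \<in> borel_measurable (borel \<Otimes>\<^sub>M borel)"
    using assms(1) by (simp add: borel_prod)
  from measurable_compose[OF measurable_Pair[OF assms(2,3)] this] show ?thesis by simp
qed


lemma int_sum4:
  fixes F :: "'q \<Rightarrow> nat \<Rightarrow> nat \<Rightarrow> 4 \<Rightarrow> 'w \<Rightarrow> real"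
  assumes "\<And>q i j k. q\<in>Q \<Longrightarrow> i\<in>A q \<Longrightarrow> j\<in>A q \<Longrightarrow> integrable M (F q i j k)"
  shows "(\<integral>\<omega>. (\<Sum>q\<in>Q. \<Sum>i\<in>A q. \<Sum>j\<in>A q. \<Sum>k\<in>UNIV. F q i j k \<omega>) \<partial>M)
       = (\<Sum>q\<in>Q. \<Sum>i\<in>A q. \<Sum>j\<in>A q. \<Sum>k\<in>UNIV. (\<integral>\<omega>. F q i j k \<omega> \<partial>M))"
proof -
  have "(\<integral>\<omega>. (\<Sum>q\<in>Q. \<Sum>i\<in>A q. \<Sum>j\<in>A q. \<Sum>k\<in>UNIV. F q i j k \<omega>) \<partial>M)
     = (\<Sum>q\<in>Q. (\<integral>\<omega>. (\<Sum>i\<in>A q. \<Sum>j\<in>A q. \<Sum>k\<in>UNIV. F q i j k \<omega>) \<partial>M))"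
    by (rule Bochner_Integration.integral_sum) (intro Bochner_Integration.integrable_sum assms; assumption)
  also have "\<dots> = (\<Sum>q\<in>Q. \<Sum>i\<in>A q. (\<integral>\<omega>. (\<Sum>j\<in>A q. \<Sum>k\<in>UNIV. F q i j k \<omega>) \<partial>M))"
    by (intro sum.cong refl Bochner_Integration.integral_sum Bochner_Integration.integrable_sum assms; assumption)
  also have "\<dots> = (\<Sum>q\<in>Q. \<Sum>i\<in>A q. \<Sum>j\<in>A q. (\<integral>\<omega>. (\<Sum>k\<in>UNIV. F q i j k \<omega>) \<partial>M))"
    by (intro sum.cong refl Bochner_Integration.integral_sum Bochner_Integration.integrable_sum assms; assumption)
  also have "\<dots> = (\<Sum>q\<in>Q. \<Sum>i\<in>A q. \<Sum>j\<in>A q. \<Sum>k\<in>UNIV. (\<integral>\<omega>. F q i j k \<omega> \<partial>M))"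
    by (intro sum.cong refl Bochner_Integration.integral_sum Bochner_Integration.integrable_sum assms; assumption)
  finally show ?thesis .
qed

lemma key:
  fixes M F :: "'w measure" and Ua Ub Uc Ud ga gb gc Y T :: "'w \<Rightarrow> real"
  assumes P: "prob_space M" and sub: "subalgebra M F"
  and mU [measurable]: "Ua \<in> borel_measurable F" "Ub \<in> borel_measurable F" "Uc \<in> borel_measurable F" "Ud \<in> borel_measurable F"
  and mg [measurable]: "ga \<in> borel_measurable M" "gb \<in> borel_measurable M" "gc \<in> borel_measurable M"
  and bg: "\<And>\<omega>. \<omega> \<in> space M \<Longrightarrow> \<bar>ga \<omega>\<bar> \<le> 1" "\<And>\<omega>. \<omega> \<in> space M \<Longrightarrow> \<bar>gb \<omega>\<bar> \<le> 1" "\<And>\<omega>. \<omega> \<in> space M \<Longrightarrow> \<bar>gc \<omega>\<bar> \<le> 1"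
  and iY: "integrable M Y" and Yeq: "\<And>\<omega>. \<omega> \<in> space M \<Longrightarrow> Y \<omega> = Ua \<omega> + Ub \<omega> * ga \<omega> + Uc \<omega> * gb \<omega> + Ud \<omega> * gc \<omega>"
  and iT: "integrable M T" and Teq: "AE \<omega> in M. T \<omega> = Ua \<omega> + Ub \<omega> * real_cond_exp M F ga \<omega>
        + Uc \<omega> * real_cond_exp M F gb \<omega> + Ud \<omega> * real_cond_exp M F gc \<omega>"
  shows "integral\<^sup>L M Y = integral\<^sup>L M T"
proof -
  interpret prob_space M by fact
  interpret sigma_finite_subalgebra M F
    by (rule finite_measure_subalgebra_is_sigma_finite) (simp add: finite_measure_subalgebra_def finite_measure_subalgebra_axioms_def sub finite_measure_axioms)
  have [measurable]: "Ua \<in> borel_measurable M" "Ub \<in> borel_measurable M" "Uc \<in> borel_measurable M" "Ud \<in> borel_measurable M"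
    using mU measurable_from_subalg[OF sub] by blast+
  define S where "S = (\<lambda>\<omega>. \<bar>Ua \<omega>\<bar> + \<bar>Ub \<omega>\<bar> + \<bar>Uc \<omega>\<bar> + \<bar>Ud \<omega>\<bar>)"
  have [measurable]: "S \<in> borel_measurable F" unfolding S_def by measurable
  define ind where "ind = (\<lambda>(N::nat) \<omega>. if S \<omega> \<le> real N then 1 else (0::real))"
  have mind [measurable]: "ind N \<in> borel_measurable F" for N unfolding ind_def by measurable
  have mindM [measurable]: "ind N \<in> borel_measurable M" for N using mind measurable_from_subalg[OF sub] by blast
  have bnd: "\<bar>ind N \<omega> * U \<omega>\<bar> \<le> real N" if "\<bar>U \<omega>\<bar> \<le> S \<omega>" for N \<omega> U
    using that by (auto simp: ind_def)
  have tm: "(\<integral>\<omega>. ind N \<omega> * U \<omega> * g \<omega> \<partial>M) = (\<integral>\<omega>. ind N \<omega> * U \<omega> * real_cond_exp M F g \<omega> \<partial>M)"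
       "integrable M (\<lambda>\<omega>. ind N \<omega> * U \<omega> * g \<omega>)"
       "integrable M (\<lambda>\<omega>. ind N \<omega> * U \<omega> * real_cond_exp M F g \<omega>)"
    if [measurable]: "U \<in> borel_measurable F" "g \<in> borel_measurable M"
      and US: "\<And>\<omega>. \<bar>U \<omega>\<bar> \<le> S \<omega>" and gb: "\<And>\<omega>. \<omega> \<in> space M \<Longrightarrow> \<bar>g \<omega>\<bar> \<le> 1" for N U g
  proof -
    have [measurable]: "U \<in> borel_measurable M" using that(1) measurable_from_subalg[OF sub] by blast
    show i1: "integrable M (\<lambda>\<omega>. ind N \<omega> * U \<omega> * g \<omega>)"
    proof (rule integrable_const_bound[where B="real N"])
      show "AE \<omega> in M. norm (ind N \<omega> * U \<omega> * g \<omega>) \<le> real N"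
      proof (rule AE_I2)
        fix \<omega> assume w: "\<omega> \<in> space M"
        have "\<bar>ind N \<omega> * U \<omega> * g \<omega>\<bar> = \<bar>ind N \<omega> * U \<omega>\<bar> * \<bar>g \<omega>\<bar>" by (simp add: abs_mult)
        also have "\<dots> \<le> real N * 1" proof (rule mult_mono)
          show "\<bar>ind N \<omega> * U \<omega>\<bar> \<le> real N" by (rule bnd) (rule US)
          show "\<bar>g \<omega>\<bar> \<le> 1" by (rule gb[OF w])
        qed auto
        finally show "norm (ind N \<omega> * U \<omega> * g \<omega>) \<le> real N" by simp
      qed
    qed measurable
    have mf: "(\<lambda>\<omega>. ind N \<omega> * U \<omega>) \<in> borel_measurable F" by measurable
    have i1': "integrable M (\<lambda>\<omega>. (ind N \<omega> * U \<omega>) * g \<omega>)" using i1 by simp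
    show "integrable M (\<lambda>\<omega>. ind N \<omega> * U \<omega> * real_cond_exp M F g \<omega>)"
      using real_cond_exp_intg(1)[OF i1' mf that(2)] .
    show "(\<integral>\<omega>. ind N \<omega> * U \<omega> * g \<omega> \<partial>M) = (\<integral>\<omega>. ind N \<omega> * U \<omega> * real_cond_exp M F g \<omega> \<partial>M)"
      using real_cond_exp_intg(2)[OF i1' mf that(2)] by simp
  qed
  have US: "\<bar>Ua \<omega>\<bar> \<le> S \<omega>" "\<bar>Ub \<omega>\<bar> \<le> S \<omega>" "\<bar>Uc \<omega>\<bar> \<le> S \<omega>" "\<bar>Ud \<omega>\<bar> \<le> S \<omega>" for \<omega>
    unfolding S_def by auto
  have one: "(\<lambda>\<omega>::'w. 1::real) \<in> borel_measurable M" "\<And>\<omega>. \<omega> \<in> space M \<Longrightarrow> \<bar>1::real\<bar> \<le> 1" by auto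
  have i0: "integrable M (\<lambda>\<omega>. ind N \<omega> * Ua \<omega>)" for N
    using tm(2)[OF mU(1) one(1) US(1) one(2)] by simp
  note t1 = tm[OF mU(2) mg(1) US(2) bg(1)]
  note t2 = tm[OF mU(3) mg(2) US(3) bg(2)]
  note t3 = tm[OF mU(4) mg(3) US(4) bg(3)]
  have [measurable]: "T \<in> borel_measurable M" "Y \<in> borel_measurable M" using iT iY by auto
  have eqN: "(\<integral>\<omega>. ind N \<omega> * Y \<omega> \<partial>M) = (\<integral>\<omega>. ind N \<omega> * T \<omega> \<partial>M)" for N
  proof -
    have "(\<integral>\<omega>. ind N \<omega> * Y \<omega> \<partial>M) = (\<integral>\<omega>. ind N \<omega> * Ua \<omega> + ind N \<omega> * Ub \<omega> * ga \<omega> + ind N \<omega> * Uc \<omega> * gb \<omega> + ind N \<omega> * Ud \<omega> * gc \<omega> \<partial>M)"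
      by (rule Bochner_Integration.integral_cong) (auto simp: Yeq algebra_simps)
    also have "\<dots> = (\<integral>\<omega>. ind N \<omega> * Ua \<omega> \<partial>M) + (\<integral>\<omega>. ind N \<omega> * Ub \<omega> * ga \<omega> \<partial>M) + (\<integral>\<omega>. ind N \<omega> * Uc \<omega> * gb \<omega> \<partial>M) + (\<integral>\<omega>. ind N \<omega> * Ud \<omega> * gc \<omega> \<partial>M)"
      using i0 t1 t2 t3 by simp
    also have "\<dots> = (\<integral>\<omega>. ind N \<omega> * Ua \<omega> \<partial>M) + (\<integral>\<omega>. ind N \<omega> * Ub \<omega> * real_cond_exp M F ga \<omega> \<partial>M) + (\<integral>\<omega>. ind N \<omega> * Uc \<omega> * real_cond_exp M F gb \<omega> \<partial>M) + (\<integral>\<omega>. ind N \<omega> * Ud \<omega> * real_cond_exp M F gc \<omega> \<partial>M)"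
      using t1 t2 t3 by simp
    also have "\<dots> = (\<integral>\<omega>. ind N \<omega> * Ua \<omega> + ind N \<omega> * Ub \<omega> * real_cond_exp M F ga \<omega> + ind N \<omega> * Uc \<omega> * real_cond_exp M F gb \<omega> + ind N \<omega> * Ud \<omega> * real_cond_exp M F gc \<omega> \<partial>M)"
      using i0 t1 t2 t3 by simp
    also have "\<dots> = (\<integral>\<omega>. ind N \<omega> * T \<omega> \<partial>M)"
      by (rule integral_cong_AE) (use Teq in \<open>auto simp: algebra_simps\<close>)
    finally show ?thesis .
  qed
  have conv: "(\<lambda>N. \<integral>\<omega>. ind N \<omega> * Z \<omega> \<partial>M) \<longlonglongrightarrow> integral\<^sup>L M Z" if iZ: "integrable M Z" for Z
  proof (rule integral_dominated_convergence[where w="\<lambda>\<omega>. norm (Z \<omega>)"])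
    show "Z \<in> borel_measurable M" using iZ by auto
    show "(\<lambda>\<omega>. ind N \<omega> * Z \<omega>) \<in> borel_measurable M" for N using iZ by measurable
    show "integrable M (\<lambda>\<omega>. norm (Z \<omega>))" using iZ by auto
    show "AE \<omega> in M. (\<lambda>N. ind N \<omega> * Z \<omega>) \<longlonglongrightarrow> Z \<omega>"
    proof (rule AE_I2)
      fix \<omega>
      obtain N0 :: nat where "S \<omega> \<le> real N0" using real_nat_ceiling_ge by blast
      then have "eventually (\<lambda>N. ind N \<omega> * Z \<omega> = Z \<omega>) sequentially"
        unfolding eventually_sequentially ind_def
        by (intro exI[of _ N0]) auto
      then show "(\<lambda>N. ind N \<omega> * Z \<omega>) \<longlonglongrightarrow> Z \<omega>"
        by (rule tendsto_eventually[THEN tendsto_cong[THEN iffD1, rotated]]) (auto elim: eventually_mono)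
    qed
    show "AE \<omega> in M. norm (ind N \<omega> * Z \<omega>) \<le> norm (Z \<omega>)" for N
      by (auto simp: ind_def)
  qed
  have "(\<lambda>N. \<integral>\<omega>. ind N \<omega> * Y \<omega> \<partial>M) \<longlonglongrightarrow> integral\<^sup>L M T"
    using conv[OF iT] eqN by simp
  with conv[OF iY] show ?thesis using LIMSEQ_unique by blast
qed

theorem theorem1:
  fixes M :: "'w measure" and Nx :: "'f measure"
    and Q :: "'q set" and n :: "'q \<Rightarrow> nat"
    and x :: "'q \<Rightarrow> nat \<Rightarrow> 'w \<Rightarrow> 'f"
    and r e c :: "'q \<Rightarrow> nat \<Rightarrow> 'w \<Rightarrow> real"
    and f :: "'f \<Rightarrow> real"
    and l11 l10 l01 l00 :: "real \<Rightarrow> real \<Rightarrow> real"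
  defines "p \<equiv> \<lambda>q i. real_cond_exp M (info_sigma M Nx (x q) (r q) (n q)) (e q i)"
    and "p2 \<equiv> \<lambda>q i j. real_cond_exp M (info_sigma M Nx (x q) (r q) (n q)) (\<lambda>\<omega>. e q i \<omega> * e q j \<omega>)"
    and "Tterm \<equiv> \<lambda>q i j \<omega>. zvec l11 l10 l01 l00 (f (x q i \<omega>)) (f (x q j \<omega>)) \<bullet>
            svec (r q i \<omega>) (r q j \<omega>)"
  assumes "prob_space M"
    and "finite Q"
    and "\<And>q. q \<in> Q \<Longrightarrow> n q \<ge> 1"
    and "\<And>q i. q \<in> Q \<Longrightarrow> i \<in> {1..n q} \<Longrightarrow> x q i \<in> measurable M Nx"
    and "\<And>q i. q \<in> Q \<Longrightarrow> i \<in> {1..n q} \<Longrightarrow> r q i \<in> borel_measurable M"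
    and "\<And>q i. q \<in> Q \<Longrightarrow> i \<in> {1..n q} \<Longrightarrow> e q i \<in> borel_measurable M"
    and "\<And>q i. q \<in> Q \<Longrightarrow> i \<in> {1..n q} \<Longrightarrow> c q i \<in> borel_measurable M"
    and "\<And>q i \<omega>. q \<in> Q \<Longrightarrow> i \<in> {1..n q} \<Longrightarrow> \<omega> \<in> space M \<Longrightarrow> r q i \<omega> \<in> {0, 1}"
    and "\<And>q i \<omega>. q \<in> Q \<Longrightarrow> i \<in> {1..n q} \<Longrightarrow> \<omega> \<in> space M \<Longrightarrow> e q i \<omega> \<in> {0, 1}"
    and "\<And>q i \<omega>. q \<in> Q \<Longrightarrow> i \<in> {1..n q} \<Longrightarrow> \<omega> \<in> space M \<Longrightarrow> c q i \<omega> \<in> {0, 1}"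
    and "f \<in> borel_measurable Nx"
    and "(\<lambda>(u, v). l11 u v) \<in> borel_measurable borel"
    and "(\<lambda>(u, v). l10 u v) \<in> borel_measurable borel"
    and "(\<lambda>(u, v). l01 u v) \<in> borel_measurable borel"
    and "(\<lambda>(u, v). l00 u v) \<in> borel_measurable borel"
    \<comment> \<open>(1) examination hypothesis\<close>
    and "\<And>q i \<omega>. q \<in> Q \<Longrightarrow> i \<in> {1..n q} \<Longrightarrow> \<omega> \<in> space M \<Longrightarrow> c q i \<omega> = e q i \<omega> * r q i \<omega>"
    \<comment> \<open>(2) positivity\<close>
    and "\<And>q i. q \<in> Q \<Longrightarrow> i \<in> {1..n q} \<Longrightarrow> AE \<omega> in M. p q i \<omega> > 0"
    and "\<And>q i j. q \<in> Q \<Longrightarrow> i \<in> {1..n q} \<Longrightarrow> j \<in> {1..n q} \<Longrightarrow> AE \<omega> in M. p2 q i j \<omega> > 0"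
    \<comment> \<open>existence of the expectations involved (componentwise)\<close>
    and "\<And>q i j k. q \<in> Q \<Longrightarrow> i \<in> {1..n q} \<Longrightarrow> j \<in> {1..n q} \<Longrightarrow>
           integrable M (\<lambda>\<omega>. zvec l11 l10 l01 l00 (f (x q i \<omega>)) (f (x q j \<omega>)) $ k *
             (Amat (1 / p q i \<omega>) (1 / p q j \<omega>) (1 / p2 q i j \<omega>) *v svec (c q i \<omega>) (c q j \<omega>)) $ k)"
    and "\<And>q i j k. q \<in> Q \<Longrightarrow> i \<in> {1..n q} \<Longrightarrow> j \<in> {1..n q} \<Longrightarrow>
           integrable M (\<lambda>\<omega>. zvec l11 l10 l01 l00 (f (x q i \<omega>)) (f (x q j \<omega>)) $ k *
             svec (r q i \<omega>) (r q j \<omega>) $ k)"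
  shows "(\<integral>\<omega>. (\<Sum>q\<in>Q. \<Sum>i\<in>{1..n q}. \<Sum>j\<in>{1..n q}. zvec l11 l10 l01 l00 (f (x q i \<omega>)) (f (x q j \<omega>)) \<bullet>
            (Amat (1 / p q i \<omega>) (1 / p q j \<omega>) (1 / p2 q i j \<omega>) *v svec (c q i \<omega>) (c q j \<omega>))) \<partial>M)
       = (\<integral>\<omega>. (\<Sum>q\<in>Q. \<Sum>i\<in>{1..n q}. \<Sum>j\<in>{1..n q}. Tterm q i j \<omega>) \<partial>M)"
proof -
  note asm = assms
  interpret prob_space M by (rule assms(4))
  have main: "(\<integral>\<omega>. zvec l11 l10 l01 l00 (f (x q i \<omega>)) (f (x q j \<omega>)) $ k *
             (Amat (1 / p q i \<omega>) (1 / p q j \<omega>) (1 / p2 q i j \<omega>) *v svec (c q i \<omega>) (c q j \<omega>)) $ k \<partial>M)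
     = (\<integral>\<omega>. zvec l11 l10 l01 l00 (f (x q i \<omega>)) (f (x q j \<omega>)) $ k * svec (r q i \<omega>) (r q j \<omega>) $ k \<partial>M)"
    if q: "q \<in> Q" and i: "i \<in> {1..n q}" and j: "j \<in> {1..n q}" for q i j k
  proof -
    define G where "G = info_sigma M Nx (x q) (r q) (n q)"
    have xm: "\<And>i. i\<in>{1..n q} \<Longrightarrow> x q i \<in> measurable M Nx" using asm(7) q by blast
    have rm: "\<And>i. i\<in>{1..n q} \<Longrightarrow> r q i \<in> borel_measurable M" using asm(8) q by blast
    note GP = info_sigma_props[of "n q" "x q" M Nx "r q", OF xm rm, folded G_def]
    have sub: "subalgebra M G" by (rule GP(1))
    interpret S: sigma_finite_subalgebra M G
      by (rule finite_measure_subalgebra_is_sigma_finite) (simp add: finite_measure_subalgebra_def finite_measure_subalgebra_axioms_def sub finite_measure_axioms)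
    have [measurable]: "r q i \<in> borel_measurable G" "r q j \<in> borel_measurable G"
      "x q i \<in> measurable G Nx" "x q j \<in> measurable G Nx"
      using GP(2,3) i j by auto
    have [measurable]: "f \<in> borel_measurable Nx" by (rule asm(14))
    have [measurable]: "e q i \<in> borel_measurable M" "e q j \<in> borel_measurable M"
      using asm(9) q i j by auto
    have lm [measurable]:
      "(\<lambda>\<omega>. l11 (f (x q i \<omega>)) (f (x q j \<omega>))) \<in> borel_measurable G"
      "(\<lambda>\<omega>. l10 (f (x q i \<omega>)) (f (x q j \<omega>))) \<in> borel_measurable G"
      "(\<lambda>\<omega>. l01 (f (x q i \<omega>)) (f (x q j \<omega>))) \<in> borel_measurable G"
      "(\<lambda>\<omega>. l00 (f (x q i \<omega>)) (f (x q j \<omega>))) \<in> borel_measurable G"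
      by (rule comp_meas[OF asm(15)] comp_meas[OF asm(16)] comp_meas[OF asm(17)] comp_meas[OF asm(18)]; measurable)+
    define L where "L \<omega> = zvec l11 l10 l01 l00 (f (x q i \<omega>)) (f (x q j \<omega>)) $ k" for \<omega>
    have Lm [measurable]: "L \<in> borel_measurable G"
      unfolding L_def zvec_comp by measurable
    have pe: "real_cond_exp M G (e q i) = p q i" "real_cond_exp M G (e q j) = p q j"
      "real_cond_exp M G (\<lambda>\<omega>. e q i \<omega> * e q j \<omega>) = p2 q i j"
      by (simp_all add: p_def p2_def G_def)
    have [measurable]: "p q i \<in> borel_measurable G" "p q j \<in> borel_measurable G" "p2 q i j \<in> borel_measurable G"
      unfolding pe[symmetric] by measurable
    define d where "d m = (if k = m then 1 else (0::real))" for m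
    have "integral\<^sup>L M (\<lambda>\<omega>. L \<omega> * (Amat (1 / p q i \<omega>) (1 / p q j \<omega>) (1 / p2 q i j \<omega>) *v svec (c q i \<omega>) (c q j \<omega>)) $ k)
        = integral\<^sup>L M (\<lambda>\<omega>. L \<omega> * svec (r q i \<omega>) (r q j \<omega>) $ k)"
    proof (rule key[where F=G and Ua="\<lambda>\<omega>. L \<omega> * d 4"
          and Ub="\<lambda>\<omega>. L \<omega> * (1 / p q i \<omega>) * r q i \<omega> * (d 2 - d 4)"
          and Uc="\<lambda>\<omega>. L \<omega> * (1 / p q j \<omega>) * r q j \<omega> * (d 3 - d 4)"
          and Ud="\<lambda>\<omega>. L \<omega> * (1 / p2 q i j \<omega>) * r q i \<omega> * r q j \<omega> * (d 1 - d 2 - d 3 + d 4)"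
          and ga="e q i" and gb="e q j" and gc="\<lambda>\<omega>. e q i \<omega> * e q j \<omega>"])
      show "prob_space M" by (rule asm(4))
      show "subalgebra M G" by (rule sub)
      show "integrable M (\<lambda>\<omega>. L \<omega> * (Amat (1 / p q i \<omega>) (1 / p q j \<omega>) (1 / p2 q i j \<omega>) *v svec (c q i \<omega>) (c q j \<omega>)) $ k)"
        unfolding L_def by (rule asm(22)[OF q i j])
      show "integrable M (\<lambda>\<omega>. L \<omega> * svec (r q i \<omega>) (r q j \<omega>) $ k)"
        unfolding L_def by (rule asm(23)[OF q i j])
      show "\<bar>e q i \<omega>\<bar> \<le> 1" "\<bar>e q j \<omega>\<bar> \<le> 1" "\<bar>e q i \<omega> * e q j \<omega>\<bar> \<le> 1" if "\<omega> \<in> space M" for \<omega>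
        using asm(12)[OF q i that] asm(12)[OF q j that] by auto
      show "L \<omega> * (Amat (1 / p q i \<omega>) (1 / p q j \<omega>) (1 / p2 q i j \<omega>) *v svec (c q i \<omega>) (c q j \<omega>)) $ k =
          L \<omega> * d 4 + L \<omega> * (1 / p q i \<omega>) * r q i \<omega> * (d 2 - d 4) * e q i \<omega> +
          L \<omega> * (1 / p q j \<omega>) * r q j \<omega> * (d 3 - d 4) * e q j \<omega> +
          L \<omega> * (1 / p2 q i j \<omega>) * r q i \<omega> * r q j \<omega> * (d 1 - d 2 - d 3 + d 4) * (e q i \<omega> * e q j \<omega>)"
        if w: "\<omega> \<in> space M" for \<omega>
      proof -
        have ci: "c q i \<omega> = e q i \<omega> * r q i \<omega>" using asm(19)[OF q i w] .
        have cj: "c q j \<omega> = e q j \<omega> * r q j \<omega>" using asm(19)[OF q j w] .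
        show ?thesis using exhaust_4[of k]
          by (elim disjE) (simp_all add: Amat_comp ci cj d_def algebra_simps)
      qed
      show "AE \<omega> in M. L \<omega> * svec (r q i \<omega>) (r q j \<omega>) $ k =
          L \<omega> * d 4 + L \<omega> * (1 / p q i \<omega>) * r q i \<omega> * (d 2 - d 4) * real_cond_exp M G (e q i) \<omega> +
          L \<omega> * (1 / p q j \<omega>) * r q j \<omega> * (d 3 - d 4) * real_cond_exp M G (e q j) \<omega> +
          L \<omega> * (1 / p2 q i j \<omega>) * r q i \<omega> * r q j \<omega> * (d 1 - d 2 - d 3 + d 4) * real_cond_exp M G (\<lambda>\<omega>. e q i \<omega> * e q j \<omega>) \<omega>"
        unfolding pe
        using asm(20)[OF q i] asm(20)[OF q j] asm(21)[OF q i j]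
      proof eventually_elim
        case (elim \<omega>)
        then show ?case using exhaust_4[of k]
          by (elim disjE) (simp_all add: svec_comp d_def field_simps)
      qed
    qed measurable
    then show ?thesis unfolding L_def .
  qed
  have iY: "integrable M (\<lambda>\<omega>. zvec l11 l10 l01 l00 (f (x q i \<omega>)) (f (x q j \<omega>)) $ k *
             (Amat (1 / p q i \<omega>) (1 / p q j \<omega>) (1 / p2 q i j \<omega>) *v svec (c q i \<omega>) (c q j \<omega>)) $ k)"
    if "q \<in> Q" "i \<in> {1..n q}" "j \<in> {1..n q}" for q i j k using asm(22) that by blast
  have iT: "integrable M (\<lambda>\<omega>. zvec l11 l10 l01 l00 (f (x q i \<omega>)) (f (x q j \<omega>)) $ k * svec (r q i \<omega>) (r q j \<omega>) $ k)"
    if "q \<in> Q" "i \<in> {1..n q}" "j \<in> {1..n q}" for q i j k using asm(23) that by blast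
  have "(\<integral>\<omega>. (\<Sum>q\<in>Q. \<Sum>i\<in>{1..n q}. \<Sum>j\<in>{1..n q}. zvec l11 l10 l01 l00 (f (x q i \<omega>)) (f (x q j \<omega>)) \<bullet>
            (Amat (1 / p q i \<omega>) (1 / p q j \<omega>) (1 / p2 q i j \<omega>) *v svec (c q i \<omega>) (c q j \<omega>))) \<partial>M)
     = (\<Sum>q\<in>Q. \<Sum>i\<in>{1..n q}. \<Sum>j\<in>{1..n q}. \<Sum>k\<in>UNIV. (\<integral>\<omega>. zvec l11 l10 l01 l00 (f (x q i \<omega>)) (f (x q j \<omega>)) $ k *
             (Amat (1 / p q i \<omega>) (1 / p q j \<omega>) (1 / p2 q i j \<omega>) *v svec (c q i \<omega>) (c q j \<omega>)) $ k \<partial>M))"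
    unfolding inner4 by (rule int_sum4) (rule iY)
  also have "\<dots> = (\<Sum>q\<in>Q. \<Sum>i\<in>{1..n q}. \<Sum>j\<in>{1..n q}. \<Sum>k\<in>UNIV. (\<integral>\<omega>. zvec l11 l10 l01 l00 (f (x q i \<omega>)) (f (x q j \<omega>)) $ k * svec (r q i \<omega>) (r q j \<omega>) $ k \<partial>M))"
    by (intro sum.cong refl main) auto
  also have "\<dots> = (\<integral>\<omega>. (\<Sum>q\<in>Q. \<Sum>i\<in>{1..n q}. \<Sum>j\<in>{1..n q}. Tterm q i j \<omega>) \<partial>M)"
    unfolding Tterm_def inner4 by (rule int_sum4[symmetric]) (rule iT)
  finally show ?thesis .
qed

end
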